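(* Let $n\ge 1$, let $\mathcal{P}=\{x\in\mathbb{R}^n : \tfrac12(\max_i x_i-\min_i x_i)\le 1\}$, and let $V=\{-1,0,1\}^n\setminus(\{-1,0\}^n\cup\{0,1\}^n)$ be the set of vectors with entries in $\{-1,0,1\}$ having at least one entry equal to $1$ and at least one entry equal to $-1$. Then each proper open face of $\mathcal{P}$ contains exactly one element of $V$. Moreover, for any $x\in\partial\mathcal{P}=\mathcal{P}\setminus\operatorname{int}(\mathcal{P})$, the element of $V$ lying in the same open face as $x$ is $v=\operatorname{round}\big(x+(1-\max_i x_i)\mathbf{1}\big)$, where $\mathbf{1}=(1,\dots,1)^\top$ and $\operatorname{round}(\cdot)$ replaces by $0$ every component that is not equal to $1$ or $-1$.
   Context: A polyhedron is a finite intersection of closed halfspaces. A face of a polyhedron $\mathcal{Q}\subseteq\mathbb{R}^n$ is a non-empty subset $F$ with either $F=\mathcal{Q}$ or $F=\mathcal{Q}\cap\{x: b^\top x=c\}$ for some $b\in\mathbb{R}^n$, $c\in\mathbb{R}$ with $b^\top x\le c$ for all $x\in\mathcal{Q}$. A proper face is a face different from $\mathcal{Q}$. An open face is the relative interior of a face (a face consisting of a single point is its own open face); a proper open face is the relative interior of a proper face. *)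

theory Defs
  imports "HOL-Analysis.Analysis"
begin

definition poly_face :: "'a::euclidean_space set \<Rightarrow> 'a set \<Rightarrow> bool" where
  "poly_face Q F \<longleftrightarrow> F \<noteq> {} \<and>
     (F = Q \<or> (\<exists>b c. F = Q \<inter> {x. b \<bullet> x = c} \<and> (\<forall>x\<in>Q. b \<bullet> x \<le> c)))"

definition proper_open_face :: "'a::euclidean_space set \<Rightarrow> 'a set \<Rightarrow> bool" where
  "proper_open_face Q G \<longleftrightarrow> (\<exists>F. poly_face Q F \<and> F \<noteq> Q \<and> G = rel_interior F)"

definition vmax :: "real^'n \<Rightarrow> real" where
  "vmax x = Max (range (\<lambda>i. x $ i))"

definition vmin :: "real^'n \<Rightarrow> real" where
  "vmin x = Min (range (\<lambda>i. x $ i))"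

definition polyP :: "(real^'n) set" where
  "polyP = {x. (vmax x - vmin x) / 2 \<le> 1}"

definition setV :: "(real^'n) set" where
  "setV = {v. (\<forall>i. v $ i \<in> {-1, 0, 1}) \<and> (\<exists>i. v $ i = 1) \<and> (\<exists>j. v $ j = -1)}"

definition round_vec :: "real^'n \<Rightarrow> real^'n" where
  "round_vec x = (\<chi> i. if x $ i = 1 \<or> x $ i = -1 then x $ i else 0)"

definition ones :: "real^'n" where
  "ones = (\<chi> i. 1)"

end

theory Submission
  imports Defs
begin


lemma vmax_ge: "x$i \<le> vmax (x::real^'n)"
  unfolding vmax_def by (rule Max_ge) auto
lemma vmax_ex: "\<exists>i. x$i = vmax (x::real^'n)"
proof -
  have "vmax x \<in> range (\<lambda>i. x$i)" unfolding vmax_def by (rule Max_in) auto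
  then show ?thesis by auto
qed
lemma vmin_le: "vmin (x::real^'n) \<le> x$i"
  unfolding vmin_def by (rule Min_le) auto
lemma vmin_ex: "\<exists>i. x$i = vmin (x::real^'n)"
proof -
  have "vmin x \<in> range (\<lambda>i. x$i)" unfolding vmin_def by (rule Min_in) auto
  then show ?thesis by auto
qed

lemma P_iff: "(z::real^'n) \<in> polyP \<longleftrightarrow> (\<forall>i j. z$i - z$j \<le> 2)"
proof
  assume "z \<in> polyP"
  then have "vmax z - vmin z \<le> 2" unfolding polyP_def by simp
  then show "\<forall>i j. z$i - z$j \<le> 2"
    using vmax_ge[of z] vmin_le[of z] by (smt (verit))
next
  assume "\<forall>i j. z$i - z$j \<le> 2"
  moreover obtain i j where "z$i = vmax z" "z$j = vmin z" using vmax_ex[of z] vmin_ex[of z] by blast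
  ultimately have "vmax z - vmin z \<le> 2" by metis
  then show "z \<in> polyP" unfolding polyP_def by simp
qed

lemma gap:
  fixes f :: "'a::finite \<Rightarrow> real"
  assumes "0 < B"
  shows "\<exists>\<mu>. 0 \<le> \<mu> \<and> \<mu> < B \<and> (\<forall>a. f a < B \<longrightarrow> f a \<le> \<mu>)"
proof -
  define S where "S = insert 0 (f ` {a. f a < B})"
  have fin: "finite S" unfolding S_def by auto
  have "Max S \<in> S" using fin by (intro Max_in) (auto simp: S_def)
  then have "Max S < B" using assms by (auto simp: S_def)
  moreover have "0 \<le> Max S" using fin by (intro Max_ge) (auto simp: S_def)
  moreover have "\<forall>a. f a < B \<longrightarrow> f a \<le> Max S" using fin by (auto intro!: Max_ge simp: S_def)
  ultimately show ?thesis by blast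
qed

lemma convex_P: "convex (polyP :: (real^'n) set)"
  unfolding convex_def
proof (intro allI impI ballI)
  fix x y :: "real^'n" and u v :: real
  assume h0: "x \<in> polyP" "y \<in> polyP" and h: "0 \<le> u" "0 \<le> v" "u + v = 1"
  have hx: "\<forall>i j. x$i - x$j \<le> 2" "\<forall>i j. y$i - y$j \<le> 2" using h0 P_iff by auto
  show "u *\<^sub>R x + v *\<^sub>R y \<in> polyP" unfolding P_iff
  proof (intro allI)
  fix i j
  have "u * (x$i - x$j) \<le> u * 2" using h hx by (intro mult_left_mono) auto
  moreover have "v * (y$i - y$j) \<le> v * 2" using h hx by (intro mult_left_mono) auto
  ultimately show "(u *\<^sub>R x + v *\<^sub>R y) $ i - (u *\<^sub>R x + v *\<^sub>R y) $ j \<le> 2"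
    using h by (simp add: algebra_simps)
  qed
qed

lemma int_lemma:
  assumes "vmax x - vmin x < 2"
  shows "(x::real^'n) \<in> interior polyP"
proof -
  let ?g = "2 - (vmax x - vmin x)"
  have "\<exists>e>0. x + e *\<^sub>R d \<in> polyP" for d
  proof -
    define e where "e = ?g / (2 * (norm d + 1))"
    have e0: "e > 0" using assms unfolding e_def by (intro divide_pos_pos) (auto intro: add_nonneg_pos)
    have ee: "e * (2 * norm d) < ?g"
    proof -
      have "e * (2 * norm d) = ?g * (norm d / (norm d + 1))" proof -
        have "norm d + 1 > 0" by (simp add: add_nonneg_pos)
        then show ?thesis by (simp add: e_def field_simps)
      qed
      also have "\<dots> < ?g"
      proof -
        have "norm d / (norm d + 1) < 1" by (simp add: add_nonneg_pos)
        then show ?thesis using assms by (simp add: mult_less_cancel_left1 del: times_divide_eq_right)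
      qed
      finally show ?thesis .
    qed
    have "\<forall>i j. (x + e *\<^sub>R d)$i - (x + e *\<^sub>R d)$j \<le> 2"
    proof (intro allI)
      fix i j
      have "d$i - d$j \<le> 2 * norm d"
        using component_le_norm_cart[of d i] component_le_norm_cart[of d j] by auto
      then have "e * (d$i - d$j) \<le> e * (2 * norm d)" using e0 by (intro mult_left_mono) auto
      then show "(x + e *\<^sub>R d)$i - (x + e *\<^sub>R d)$j \<le> 2"
        using ee vmax_ge[of x i] vmin_le[of x j] by (simp add: algebra_simps)
    qed
    then show ?thesis using e0 P_iff by blast
  qed
  then show ?thesis using convex_interior_iff[OF convex_P] by blast
qed



definition vv :: "real^'n \<Rightarrow> real^'n" where
  "vv x = round_vec (x + (1 - vmax x) *\<^sub>R ones)"

lemma vv_comp: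
  assumes "vmax x - vmin x = 2"
  shows "vv x $ i = (if x$i = vmax x then 1 else if x$i = vmin x then -1 else 0)"
  using assms by (auto simp: vv_def round_vec_def ones_def)

lemma vv_V:
  assumes "vmax x - vmin x = 2"
  shows "vv x \<in> setV"
proof -
  obtain i j where "x$i = vmax x" "x$j = vmin x" using vmax_ex[of x] vmin_ex[of x] by blast
  moreover have "vmax x \<noteq> vmin x" using assms by auto
  ultimately have "vv x $ i = 1" "vv x $ j = -1" "\<forall>k. vv x $ k \<in> {-1,0,1}"
    using assms by (auto simp: vv_comp)
  then show ?thesis unfolding setV_def by blast
qed

lemma V_range: "v \<in> setV \<Longrightarrow> v$k = -1 \<or> v$k = 0 \<or> v$k = 1"
  unfolding setV_def by auto

lemma lemB:
  assumes F: "convex F" "F \<subseteq> polyP" and x: "x \<in> rel_interior F"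
    and xab: "x$a - x$b = 2" and w: "w \<in> F"
  shows "w$a - (w::real^'n)$b = 2"
proof -
  have "F \<noteq> {}" using w by auto
  then obtain e where e: "e > 1" "(1 - e) *\<^sub>R w + e *\<^sub>R x \<in> F"
    using convex_rel_interior_iff[OF F(1)] x w by blast
  then have "((1 - e) *\<^sub>R w + e *\<^sub>R x)$a - ((1 - e) *\<^sub>R w + e *\<^sub>R x)$b \<le> 2"
    using F P_iff by blast
  then have "(1 - e) * (w$a - w$b) \<le> (1 - e) * 2" using xab by (simp add: algebra_simps)
  then have "(e - 1) * (2 - (w$a - w$b)) \<le> 0" by (simp add: algebra_simps)
  then have "w$a - w$b \<ge> 2" using e(1) by (simp add: mult_le_0_iff)
  moreover have "w$a - w$b \<le> 2" using w F P_iff by blast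
  ultimately show ?thesis by linarith
qed

lemma lemA:
  assumes F: "F = polyP \<inter> {z. b \<bullet> z = c}" and valid: "\<forall>z\<in>polyP. b \<bullet> z \<le> c"
    and ne: "F \<noteq> polyP" and x: "(x::real^'n) \<in> rel_interior F"
  shows "vmax x - vmin x = 2"
proof (rule ccontr)
  assume a: "vmax x - vmin x \<noteq> 2"
  have xF: "x \<in> F" using x rel_interior_subset by blast
  then have xP: "x \<in> polyP" and bx: "b \<bullet> x = c" using F by auto
  have "vmax x - vmin x \<le> 2" using xP unfolding polyP_def by simp
  with a have "vmax x - vmin x < 2" by simp
  then have "x \<in> interior polyP" by (rule int_lemma)
  then obtain e where e: "e > 0" "x + e *\<^sub>R b \<in> polyP"
    using convex_interior_iff[OF convex_P] by blast
  have "b \<noteq> 0"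
  proof
    assume "b = 0"
    then have "c = 0" using bx by simp
    then show False using ne F \<open>b = 0\<close> by auto
  qed
  then have "b \<bullet> b > 0" by simp
  then have "b \<bullet> (x + e *\<^sub>R b) > c" using e bx by (simp add: inner_add_right)
  then show False using valid e by force
qed

lemma lemC:
  assumes F: "F = polyP \<inter> {z. b \<bullet> z = c}" and valid: "\<forall>z\<in>polyP. b \<bullet> z \<le> c"
    and x: "(x::real^'n) \<in> rel_interior F" and bnd: "vmax x - vmin x = 2"
  shows "vv x \<in> rel_interior F"
proof -
  have xF: "x \<in> F" using x rel_interior_subset by blast
  then have xP: "x \<in> polyP" and bx: "b \<bullet> x = c" using F by auto
  have cF: "convex F" using F convex_Int[OF convex_P convex_hyperplane] by simp
  have FP: "F \<subseteq> polyP" using F by auto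
  have b1: "b \<bullet> ones = 0"
  proof -
    have "x + ones \<in> polyP" "x - ones \<in> polyP" using xP by (auto simp: P_iff ones_def)
    then have "b \<bullet> (x + ones) \<le> c" "b \<bullet> (x - ones) \<le> c" using valid by auto
    then show ?thesis using bx by (simp add: inner_add_right inner_diff_right)
  qed
  define M where "M = vmax x"
  define y where "y = x + (1 - M) *\<^sub>R ones"
  define v where "v = vv x"
  define d where "d = y - v"
  have yb: "\<bar>y$i\<bar> \<le> 1" for i
    using vmax_ge[of x i] vmin_le[of x i] bnd by (auto simp: y_def M_def ones_def)
  have vcomp: "v$i = (if y$i = 1 \<or> y$i = -1 then y$i else 0)" for i
    by (simp add: v_def vv_def round_vec_def y_def M_def)
  have dcomp: "d$i = (if \<bar>y$i\<bar> = 1 then 0 else y$i)" for i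
    by (auto simp: d_def vcomp)
  obtain \<mu> where mu: "0 \<le> \<mu>" "\<mu> < 1" "\<forall>i. \<bar>y$i\<bar> < 1 \<longrightarrow> \<bar>y$i\<bar> \<le> \<mu>"
    using gap[of 1 "\<lambda>i. \<bar>y$i\<bar>"] by auto
  define e where "e = 1 - \<mu>"
  have zP: "y + e *\<^sub>R d \<in> polyP"
  proof -
    have "\<bar>(y + e *\<^sub>R d)$i\<bar> \<le> 1" for i
    proof (cases "\<bar>y$i\<bar> = 1")
      case True then show ?thesis by (simp add: dcomp)
    next
      case False
      then have h: "\<bar>y$i\<bar> \<le> \<mu>" using mu yb[of i] by force
      have "(y + e *\<^sub>R d)$i = (2 - \<mu>) * y$i"
        using False by (simp add: dcomp e_def algebra_simps)
      then have "\<bar>(y + e *\<^sub>R d)$i\<bar> = (2 - \<mu>) * \<bar>y$i\<bar>"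
        using mu by (simp add: abs_mult)
      also have "\<dots> \<le> (2 - \<mu>) * \<mu>" using h mu by (intro mult_left_mono) auto
      also have "\<dots> \<le> 1"
      proof -
        have "0 \<le> (1 - \<mu>) * (1 - \<mu>)" by simp
        then show ?thesis by (simp add: algebra_simps)
      qed
      finally show ?thesis .
    qed
    then show ?thesis unfolding P_iff by (smt (verit, best))
  qed
  have by_: "b \<bullet> y = c" using bx b1 by (simp add: y_def inner_add_right)
  have "b \<bullet> (y + e *\<^sub>R d) \<le> c" using zP valid by blast
  then have "e * (b \<bullet> d) \<le> 0" using by_ by (simp add: inner_add_right)
  then have bd: "b \<bullet> d \<le> 0" using mu by (simp add: e_def mult_le_0_iff)
  have vP: "v \<in> polyP"
    unfolding P_iff using yb by (auto simp: vcomp)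
  have "b \<bullet> v = c"
  proof -
    have "b \<bullet> v = b \<bullet> y - b \<bullet> d" by (simp add: d_def inner_diff_right)
    then show ?thesis using bd by_ valid vP by force
  qed
  then have vF: "v \<in> F" using F vP by auto
  have "\<forall>w\<in>F. \<exists>e. e > 1 \<and> (1 - e) *\<^sub>R w + e *\<^sub>R v \<in> F"
  proof
    fix w assume wF: "w \<in> F"
    define u where "u = (1 - 4/3) *\<^sub>R w + (4/3::real) *\<^sub>R v"
    have "b \<bullet> w = c" using wF F by auto
    then have bu: "b \<bullet> u = c" using \<open>b \<bullet> v = c\<close> by (simp add: u_def inner_add_right inner_diff_right)
    have "u$a - u$b' \<le> 2" for a b'
    proof (cases "v$a = 1 \<and> v$b' = -1")
      case True
      then have "x$a = vmax x" "x$b' = vmin x" using bnd by (auto simp: v_def vv_comp split: if_splits)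
      then have "x$a - x$b' = 2" using bnd by simp
      then have "w$a - w$b' = 2" using lemB[OF cF FP x _ wF] by blast
      then show ?thesis using True by (simp add: u_def algebra_simps)
    next
      case False
      have "v$a \<in> {-1,0,1}" "v$b' \<in> {-1,0,1}" using bnd by (auto simp: v_def vv_comp)
      then have "v$a - v$b' \<le> 1" using False by auto
      moreover have "w$b' - w$a \<le> 2" using wF FP P_iff by blast
      ultimately show ?thesis by (simp add: u_def algebra_simps)
    qed
    then have "u \<in> F" using bu F P_iff by blast
    then show "\<exists>e. e > 1 \<and> (1 - e) *\<^sub>R w + e *\<^sub>R v \<in> F" unfolding u_def
      by (intro exI[of _ "4/3"]) auto
  qed
  then have "v \<in> rel_interior F" using convex_rel_interior_iff[OF cF] vF by blast
  then show ?thesis by (simp add: v_def)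
qed

lemma lemE_half:
  assumes F: "convex F" "F \<subseteq> polyP" and v: "v \<in> setV" "v \<in> rel_interior F"
    and w: "w \<in> setV" "w \<in> F"
  shows "(\<forall>a. v$a = 1 \<longrightarrow> w$a = 1) \<and> (\<forall>a. v$a = -1 \<longrightarrow> w$a = -1)"
proof -
  obtain i j where ij: "v$i = 1" "v$j = -1" using v unfolding setV_def by auto
  have wr: "\<forall>k. w$k = -1 \<or> w$k = 0 \<or> w$k = 1" using V_range[OF w(1)] by blast
  have 1: "w$a = 1" if "v$a = 1" for a
  proof -
    have "w$a - w$j = 2" using lemB[OF F v(2) _ w(2), of a j] that ij by simp
    then show ?thesis using wr[rule_format, of a] wr[rule_format, of j] wr[rule_format, of i] by linarith
  qed
  have 2: "w$a = -1" if "v$a = -1" for a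
  proof -
    have "w$i - w$a = 2" using lemB[OF F v(2) _ w(2), of i a] that ij by simp
    then show ?thesis using wr[rule_format, of a] wr[rule_format, of j] wr[rule_format, of i] by linarith
  qed
  show ?thesis using 1 2 by blast
qed

lemma lemE:
  assumes F: "convex F" "F \<subseteq> polyP" and v: "v \<in> setV" "v \<in> rel_interior F"
    and w: "w \<in> setV" "w \<in> rel_interior F"
  shows "v = w"
proof -
  have h1: "(\<forall>a. v$a = 1 \<longrightarrow> w$a = 1) \<and> (\<forall>a. v$a = -1 \<longrightarrow> w$a = -1)"
    using lemE_half[OF F v w(1) rel_interior_subset[THEN subsetD, OF w(2)]] .
  have h2: "(\<forall>a. w$a = 1 \<longrightarrow> v$a = 1) \<and> (\<forall>a. w$a = -1 \<longrightarrow> v$a = -1)"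
    using lemE_half[OF F w v(1) rel_interior_subset[THEN subsetD, OF v(2)]] .
  have "v$k = w$k" for k
  proof -
    have a: "v$k = 1 \<longleftrightarrow> w$k = 1" using h1 h2 by blast
    have b: "v$k = -1 \<longleftrightarrow> w$k = -1" using h1 h2 by blast
    from V_range[OF v(1), of k] V_range[OF w(1), of k] a b show ?thesis
      by (elim disjE) simp_all
  qed
  then show ?thesis by (simp add: vec_eq_iff)
qed



lemma double_sum_eq:
  fixes f :: "'a \<Rightarrow> 'b \<Rightarrow> real"
  assumes "finite I" "finite J" "\<forall>i\<in>I. \<forall>j\<in>J. f i j \<le> 2"
    and "(\<Sum>i\<in>I. \<Sum>j\<in>J. f i j) = (\<Sum>i\<in>I. \<Sum>j\<in>J. 2)"
  shows "\<forall>i\<in>I. \<forall>j\<in>J. f i j = 2"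
proof (intro ballI)
  fix i j assume ij: "i \<in> I" "j \<in> J"
  have s0: "(\<Sum>i\<in>I. \<Sum>j\<in>J. 2 - f i j) = 0"
    using assms(4) by (simp add: sum_subtractf)
  have nn: "\<And>i. i \<in> I \<Longrightarrow> 0 \<le> (\<Sum>j\<in>J. 2 - f i j)"
    using assms(3) by (intro sum_nonneg) auto
  have "(\<Sum>j\<in>J. 2 - f i j) = 0"
    using sum_nonneg_eq_0_iff[OF assms(1), of "\<lambda>i. \<Sum>j\<in>J. 2 - f i j"] s0 nn ij(1) by simp
  moreover have "\<And>j. j \<in> J \<Longrightarrow> 0 \<le> 2 - f i j" using assms(3) ij(1) by simp
  ultimately have "2 - f i j = 0"
    using sum_nonneg_eq_0_iff[OF assms(2), of "\<lambda>j. 2 - f i j"] ij(2) by simp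
  then show "f i j = 2" by simp
qed

lemma lemF:
  assumes xP: "(x::real^'n) \<in> polyP" and bnd: "vmax x - vmin x = 2"
  shows "\<exists>G. proper_open_face polyP G \<and> x \<in> G \<and> vv x \<in> G"
proof -
  define I where "I = {i. x$i = vmax x}"
  define J where "J = {j. x$j = vmin x}"
  define b :: "real^'n" where "b = (\<Sum>i\<in>I. \<Sum>j\<in>J. axis i 1 - axis j 1)"
  define c :: real where "c = (\<Sum>i\<in>I. \<Sum>j\<in>J. 2)"
  define F where "F = polyP \<inter> {z. b \<bullet> z = c}"
  have bz: "b \<bullet> z = (\<Sum>i\<in>I. \<Sum>j\<in>J. z$i - z$j)" for z
    by (simp add: b_def inner_sum_left inner_diff_left inner_axis')
  have fin: "finite I" "finite J" by auto
  have valid: "\<forall>z\<in>polyP. b \<bullet> z \<le> c"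
  proof
    fix z :: "real^'n" assume "z \<in> polyP"
    then have "\<forall>i j. z$i - z$j \<le> 2" using P_iff by blast
    then show "b \<bullet> z \<le> c" unfolding bz c_def by (intro sum_mono) auto
  qed
  have Fiff: "z \<in> F \<longleftrightarrow> z \<in> polyP \<and> (\<forall>i\<in>I. \<forall>j\<in>J. z$i - z$j = 2)" for z
  proof
    assume "z \<in> F"
    then have zP: "z \<in> polyP" and "b \<bullet> z = c" by (auto simp: F_def)
    then have "(\<Sum>i\<in>I. \<Sum>j\<in>J. z$i - z$j) = (\<Sum>i\<in>I. \<Sum>j\<in>J. 2)" by (simp add: bz c_def)
    moreover have "\<forall>i\<in>I. \<forall>j\<in>J. z$i - z$j \<le> 2" using zP P_iff by blast
    ultimately show "z \<in> polyP \<and> (\<forall>i\<in>I. \<forall>j\<in>J. z$i - z$j = 2)"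
      using double_sum_eq[OF fin, of "\<lambda>i j. z$i - z$j"] zP by blast
  next
    assume h: "z \<in> polyP \<and> (\<forall>i\<in>I. \<forall>j\<in>J. z$i - z$j = 2)"
    then have "b \<bullet> z = c" unfolding bz c_def by (intro sum.cong) auto
    then show "z \<in> F" using h by (simp add: F_def)
  qed
  obtain i0 j0 where ij0: "x$i0 = vmax x" "x$j0 = vmin x" using vmax_ex[of x] vmin_ex[of x] by blast
  have xF: "x \<in> F" using Fiff xP bnd by (simp add: I_def J_def)
  have "0 \<in> polyP" by (simp add: P_iff)
  moreover have "0 \<notin> F" using Fiff ij0 by (auto simp: I_def J_def)
  ultimately have FneP: "F \<noteq> polyP" by blast
  have face: "poly_face polyP F" unfolding poly_face_def using xF valid F_def by blast
  have cF: "convex F" unfolding F_def by (rule convex_Int[OF convex_P convex_hyperplane])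
  have "x \<in> rel_interior F"
  proof -
    have xd: "\<forall>a b. x$a - x$b \<le> 2" using xP P_iff by blast
    have "\<exists>\<mu>. 0 \<le> \<mu> \<and> \<mu> < 2 \<and> (\<forall>p. x$(fst p) - x$(snd p) < 2 \<longrightarrow> x$(fst p) - x$(snd p) \<le> \<mu>)"
      by (rule gap[of 2 "\<lambda>p::'n\<times>'n. x$(fst p) - x$(snd p)"]) simp
    then obtain \<mu> where mu0: "0 \<le> \<mu>" "\<mu> < 2"
      and mu3: "\<forall>p. x$(fst p) - x$(snd p) < 2 \<longrightarrow> x$(fst p) - x$(snd p) \<le> \<mu>" by blast
    have mu: "0 \<le> \<mu>" "\<mu> < 2" "\<And>a b. x$a - x$b < 2 \<Longrightarrow> x$a - x$b \<le> \<mu>"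
      using mu0 mu3[rule_format, of "(a,b)" for a b] by auto
    define t where "t = (2 - \<mu>) / 4"
    have t0: "t > 0" using mu by (simp add: t_def)
    have "\<forall>w\<in>F. \<exists>e. e > 1 \<and> (1 - e) *\<^sub>R w + e *\<^sub>R x \<in> F"
    proof
      fix w assume wF: "w \<in> F"
      define u where "u = (1 - (1 + t)) *\<^sub>R w + (1 + t) *\<^sub>R x"
      have wd: "\<forall>a b. w$a - w$b \<le> 2" using wF Fiff P_iff by blast
      have ud: "u$a - u$b' = (1 + t) * (x$a - x$b') - t * (w$a - w$b')" for a b'
        by (simp add: u_def algebra_simps)
      have ule: "u$a - u$b' \<le> 2" for a b'
      proof (cases "x$a - x$b' < 2")
        case True
        then have h1: "x$a - x$b' \<le> \<mu>" using mu(3) by auto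
        have "(1 + t) * (x$a - x$b') \<le> (1 + t) * \<mu>" using h1 t0 by (intro mult_left_mono) auto
        moreover have "t * (-2) \<le> t * (w$a - w$b')" using wd[rule_format, of b' a] t0
          by (intro mult_left_mono) auto
        moreover have "(1 + t) * \<mu> + t * 2 \<le> 2"
        proof -
          have "(1 + t) * \<mu> + t * 2 = 2 - (2 - \<mu>) * (2 - \<mu>) / 4" by (simp add: t_def field_simps)
          moreover have "0 \<le> (2 - \<mu>) * (2 - \<mu>)" by simp
          ultimately show ?thesis by linarith
        qed
        ultimately show ?thesis unfolding ud by linarith
      next
        case False
        then have "x$a - x$b' = 2" using xd by (meson antisym not_less)
        then have "x$a = vmax x" "x$b' = vmin x"
          using vmax_ge[of x b'] vmin_le[of x a] vmax_ge[of x a] vmin_le[of x b'] bnd by linarith+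
        then have "w$a - w$b' = 2" using wF Fiff by (auto simp: I_def J_def)
        then show ?thesis unfolding ud using \<open>x$a - x$b' = 2\<close> by (simp add: algebra_simps)
      qed
      have ueq: "\<forall>i\<in>I. \<forall>j\<in>J. u$i - u$j = 2"
      proof (intro ballI)
        fix i j assume "i \<in> I" "j \<in> J"
        then have "x$i - x$j = 2" "w$i - w$j = 2" using xF wF Fiff by blast+
        then show "u$i - u$j = 2" unfolding ud by (simp add: algebra_simps)
      qed
      have "u \<in> polyP" unfolding P_iff using ule by blast
      then have "u \<in> F" using Fiff ueq by blast
      then show "\<exists>e. e > 1 \<and> (1 - e) *\<^sub>R w + e *\<^sub>R x \<in> F"
        using t0 unfolding u_def by (intro exI[of _ "1 + t"]) auto
    qed
    then show ?thesis using convex_rel_interior_iff[OF cF] xF by blast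
  qed
  moreover have "vv x \<in> rel_interior F"
    using lemC[OF F_def valid \<open>x \<in> rel_interior F\<close> bnd] .
  moreover have "proper_open_face polyP (rel_interior F)"
    unfolding proper_open_face_def using face FneP by blast
  ultimately show ?thesis by blast
qed

theorem lemma3:
  shows "(\<forall>G. proper_open_face (polyP :: (real^'n) set) G \<longrightarrow> (\<exists>!v. v \<in> setV \<and> v \<in> G))
    \<and> (\<forall>x \<in> (polyP :: (real^'n) set) - interior polyP.
         let v = round_vec (x + (1 - vmax x) *\<^sub>R ones) in
           v \<in> setV \<and>
           (\<exists>G. proper_open_face polyP G \<and> x \<in> G \<and> v \<in> G) \<and>
           (\<forall>G. proper_open_face polyP G \<and> x \<in> G \<longrightarrow> v \<in> G))"
proof (intro conjI allI impI ballI)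
  fix G :: "(real^'n) set"
  assume "proper_open_face polyP G"
  then obtain F where face: "poly_face polyP F" and FneP: "F \<noteq> polyP" and G: "G = rel_interior F"
    unfolding proper_open_face_def by blast
  have Fne: "F \<noteq> {}" using face unfolding poly_face_def by simp
  have "\<exists>b c. F = polyP \<inter> {z. b \<bullet> z = c} \<and> (\<forall>z\<in>polyP. b \<bullet> z \<le> c)"
    using face FneP unfolding poly_face_def by simp
  then obtain b c where F: "F = polyP \<inter> {z. b \<bullet> z = c}" and valid: "\<forall>z\<in>polyP. b \<bullet> z \<le> c"
    by blast
  have cF: "convex F" unfolding F by (rule convex_Int[OF convex_P convex_hyperplane])
  have FP: "F \<subseteq> polyP" using F by auto
  have "G \<noteq> {}" using rel_interior_eq_empty[OF cF] Fne G by simp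
  then obtain x where x: "x \<in> G" by blast
  have xr: "x \<in> rel_interior F" using x G by simp
  have bnd: "vmax x - vmin x = 2" using lemA[OF F valid FneP xr] .
  have vG: "vv x \<in> rel_interior F" using lemC[OF F valid xr bnd] .
  have vV: "vv x \<in> setV" using vv_V[OF bnd] .
  have uq: "w = vv x" if "w \<in> setV \<and> w \<in> G" for w
  proof -
    have "w \<in> rel_interior F" using that G by simp
    then show ?thesis using lemE[OF cF FP _ _ vV vG, of w] that by simp
  qed
  show "\<exists>!v. v \<in> setV \<and> v \<in> G"
  proof (rule ex1I[of _ "vv x"])
    show "vv x \<in> setV \<and> vv x \<in> G" using vV vG G by simp
  next
    fix w assume "w \<in> setV \<and> w \<in> G"
    then show "w = vv x" by (rule uq)
  qed
next
  fix x :: "real^'n"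
  assume xx: "x \<in> polyP - interior polyP"
  then have xP: "x \<in> polyP" by blast
  have "vmax x - vmin x \<le> 2" using xP unfolding polyP_def by simp
  moreover have "\<not> vmax x - vmin x < 2" using int_lemma xx by blast
  ultimately have bnd: "vmax x - vmin x = 2" by linarith
  have rest: "\<forall>G. proper_open_face polyP G \<and> x \<in> G \<longrightarrow> vv x \<in> G"
  proof (intro allI impI)
    fix G assume h: "proper_open_face polyP G \<and> x \<in> G"
    then obtain F where face: "poly_face polyP F" and FneP: "F \<noteq> polyP" and G: "G = rel_interior F"
      unfolding proper_open_face_def by blast
    have "\<exists>b c. F = polyP \<inter> {z. b \<bullet> z = c} \<and> (\<forall>z\<in>polyP. b \<bullet> z \<le> c)"
      using face FneP unfolding poly_face_def by simp
    then obtain b c where F: "F = polyP \<inter> {z. b \<bullet> z = c}" and valid: "\<forall>z\<in>polyP. b \<bullet> z \<le> c"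
      by blast
    have xr: "x \<in> rel_interior F" using h G by simp
    show "vv x \<in> G" using lemC[OF F valid xr bnd] G by simp
  qed
  show "let v = round_vec (x + (1 - vmax x) *\<^sub>R ones) in
           v \<in> setV \<and>
           (\<exists>G. proper_open_face polyP G \<and> x \<in> G \<and> v \<in> G) \<and>
           (\<forall>G. proper_open_face polyP G \<and> x \<in> G \<longrightarrow> v \<in> G)"
  proof -
    have "vv x \<in> setV \<and> (\<exists>G. proper_open_face polyP G \<and> x \<in> G \<and> vv x \<in> G) \<and>
      (\<forall>G. proper_open_face polyP G \<and> x \<in> G \<longrightarrow> vv x \<in> G)"
      using vv_V[OF bnd] lemF[OF xP bnd] rest by (intro conjI)
    then show ?thesis unfolding Let_def vv_def .
  qed
qed

end
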